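(* Let $R>0$, $h>0$, $g_1>0$ be reals and $\lambda_2>0$, and let $G$ be an exponential random variable with rate $\lambda_2$ (representing $g_2^2$). For $\Delta>0$ define (logarithms base $2$, $[x]^+=\max\{x,0\}$) $$R_{\mathrm{QMF}}(\Delta)=\Big[\min\Big\{\log\Big(1+\frac{h^2}{1+\Delta}+G\Big),\ \log(1+g_1^2+G)-\log\frac{1+\Delta}{\Delta}\Big\}\Big]^+,$$ and the conditional outage probability $P(\Delta)=\Pr\{R>R_{\mathrm{QMF}}(\Delta)\}$. Then $P(\Delta)$ is minimized over $\Delta>0$ at $$\Delta^*=\frac{\sqrt{(g_1^2-h^2-2^R)^2+4g_1^22^R}-(g_1^2-h^2-2^R)}{2g_1^2},$$ the positive root of $g_1^2\Delta^2+(g_1^2-h^2-2^R)\Delta-2^R=0$.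
   Context: This is the full-duplex Gaussian single-relay channel ($Y_r=\mathsf hX+Z_r$, $Y=\mathsf g_1X_r+\mathsf g_2X+Z$, unit powers and noise) under Rayleigh fading, where the relay knows the realizations of its incoming and outgoing magnitudes $h=|\mathsf h|$, $g_1=|\mathsf g_1|$ but not $g_2=|\mathsf g_2|$, for which $g_2^2$ is exponential with rate $\lambda_2$. The relay quantizes with a Gaussian vector quantizer of distortion $\Delta$, and $R_{\mathrm{QMF}}(\Delta)$ is the resulting quantize-map-and-forward rate; $P(\Delta)$ is the outage probability at rate $R$ conditioned on $h,g_1$. *)

theory Defs
  imports "HOL-Probability.Probability"
begin

definition pos_part :: "real \<Rightarrow> real" where
  "pos_part x = max x 0"

definition R_QMF :: "real \<Rightarrow> real \<Rightarrow> real \<Rightarrow> real \<Rightarrow> real" where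
  "R_QMF h g1 D Gv = pos_part (min (log 2 (1 + h\<^sup>2 / (1 + D) + Gv))
                                 (log 2 (1 + g1\<^sup>2 + Gv) - log 2 ((1 + D) / D)))"

definition outage :: "'a measure \<Rightarrow> ('a \<Rightarrow> real) \<Rightarrow> real \<Rightarrow> real \<Rightarrow> real \<Rightarrow> real \<Rightarrow> real" where
  "outage M G R h g1 D = measure M {\<omega> \<in> space M. R > R_QMF h g1 D (G \<omega>)}"

definition Delta_star :: "real \<Rightarrow> real \<Rightarrow> real \<Rightarrow> real" where
  "Delta_star R h g1 =
     (sqrt ((g1\<^sup>2 - h\<^sup>2 - 2 powr R)\<^sup>2 + 4 * g1\<^sup>2 * 2 powr R) - (g1\<^sup>2 - h\<^sup>2 - 2 powr R)) / (2 * g1\<^sup>2)"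

end

theory Submission
  imports Defs
begin

lemma out_iff:
  fixes R h g1 D x :: real
  assumes "R > 0" "D > 0" "x \<ge> 0"
  shows "R > R_QMF h g1 D x \<longleftrightarrow>
     (x < 2 powr R - 1 - h\<^sup>2/(1+D) \<or> x < 2 powr R * ((1+D)/D) - 1 - g1\<^sup>2)"
proof -
  have a: "1 + h\<^sup>2/(1+D) + x > 0" using assms by (simp add: add_pos_nonneg)
  have b: "1 + g1\<^sup>2 + x > 0" using assms by (simp add: add_pos_nonneg)
  have c: "(1+D)/D > 0" using assms by simp
  have "R > R_QMF h g1 D x \<longleftrightarrow> R > log 2 (1 + h\<^sup>2/(1+D) + x) \<or>
        R > log 2 ((1 + g1\<^sup>2 + x) / ((1+D)/D))"
  proof -
    have "log 2 (1 + g1\<^sup>2 + x) - log 2 ((1+D)/D) = log 2 ((1 + g1\<^sup>2 + x) / ((1+D)/D))"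
      using b c assms by (simp add: log_divide log_mult)
    thus ?thesis unfolding R_QMF_def pos_part_def using assms by (simp add: min_less_iff_disj)
  qed
  also have "\<dots> \<longleftrightarrow> 2 powr R > 1 + h\<^sup>2/(1+D) + x \<or> 2 powr R > (1 + g1\<^sup>2 + x) / ((1+D)/D)"
  proof -
    have "(1 + g1\<^sup>2 + x) / ((1+D)/D) > 0" using b c by (rule divide_pos_pos)
    thus ?thesis using a by (simp add: log_less_iff)
  qed
  also have "\<dots> \<longleftrightarrow> (x < 2 powr R - 1 - h\<^sup>2/(1+D) \<or> x < 2 powr R * ((1+D)/D) - 1 - g1\<^sup>2)"
  proof -
    have "2 powr R > (1 + g1\<^sup>2 + x) / ((1+D)/D) \<longleftrightarrow> 1 + g1\<^sup>2 + x < 2 powr R * ((1+D)/D)"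
      using c by (rule pos_divide_less_eq)
    thus ?thesis by linarith
  qed
  finally show ?thesis .
qed

theorem mainTheorem9:
  fixes M :: "'a measure" and G :: "'a \<Rightarrow> real" and R h g1 lam :: real
  assumes "prob_space M"
    and "distributed M lborel G (exponential_density lam)"
    and "R > 0" and "h > 0" and "g1 > 0" and "lam > 0"
  shows "Delta_star R h g1 > 0
    \<and> g1\<^sup>2 * (Delta_star R h g1)\<^sup>2 + (g1\<^sup>2 - h\<^sup>2 - 2 powr R) * Delta_star R h g1 - 2 powr R = 0
    \<and> (\<forall>D > 0. outage M G R h g1 (Delta_star R h g1) \<le> outage M G R h g1 D)"
proof -
  interpret prob_space M by fact
  define s where "s = 2 powr R"
  define b where "b = g1\<^sup>2 - h\<^sup>2 - s"
  define q where "q = sqrt (b\<^sup>2 + 4 * g1\<^sup>2 * s)"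
  define Ds where "Ds = Delta_star R h g1"
  have s: "s > 0" unfolding s_def by simp
  have g: "g1\<^sup>2 > 0" using assms by simp
  have Dsq: "Ds = (q - b) / (2 * g1\<^sup>2)" unfolding Ds_def Delta_star_def q_def b_def s_def by simp
  have q2: "q\<^sup>2 = b\<^sup>2 + 4 * g1\<^sup>2 * s" unfolding q_def
    using s g by (simp add: add_nonneg_nonneg)
  have qb: "q > b"
  proof -
    have "sqrt (b\<^sup>2) < q" unfolding q_def using s g by (intro real_sqrt_less_mono) simp
    thus ?thesis by simp
  qed
  have pos: "Ds > 0" unfolding Dsq using qb g by simp
  have quad: "g1\<^sup>2 * Ds\<^sup>2 + b * Ds - s = 0"
  proof -
    have t: "2 * g1\<^sup>2 * Ds = q - b" unfolding Dsq using g by simp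
    have "4 * g1\<^sup>2 * (g1\<^sup>2 * Ds\<^sup>2 + b * Ds) = (2 * g1\<^sup>2 * Ds)\<^sup>2 + 2 * b * (2 * g1\<^sup>2 * Ds)"
      by (simp add: algebra_simps power2_eq_square)
    also have "\<dots> = q\<^sup>2 - b\<^sup>2" unfolding t by (simp add: algebra_simps power2_eq_square)
    finally have "4 * g1\<^sup>2 * (g1\<^sup>2 * Ds\<^sup>2 + b * Ds) = 4 * g1\<^sup>2 * s" using q2 by simp
    thus ?thesis using g by simp
  qed
  define f1 where "f1 = (\<lambda>D::real. s - 1 - h\<^sup>2/(1+D))"
  define f2 where "f2 = (\<lambda>D::real. s * ((1+D)/D) - 1 - g1\<^sup>2)"
  have eqf: "f1 Ds = f2 Ds"
  proof -
    have "f1 Ds * (Ds * (1+Ds)) = f2 Ds * (Ds * (1+Ds))"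
      unfolding f1_def f2_def using pos quad unfolding b_def
      by (simp add: field_simps power2_eq_square)
    thus ?thesis using pos by simp
  qed
  have key: "f1 Ds \<le> f1 D \<or> f2 Ds \<le> f2 D" if "D > 0" for D
  proof (cases "Ds \<le> D")
    case True
    have "h\<^sup>2/(1+D) \<le> h\<^sup>2/(1+Ds)" using True pos by (intro divide_left_mono) auto
    thus ?thesis unfolding f1_def by simp
  next
    case False
    have "(1+Ds)/Ds \<le> (1+D)/D" using False pos that by (simp add: field_simps)
    hence "s * ((1+Ds)/Ds) \<le> s * ((1+D)/D)" using s by (rule mult_left_mono[OF _ less_imp_le])
    thus ?thesis unfolding f2_def by simp
  qed
  have Gm[measurable]: "G \<in> borel_measurable M" using distributed_measurable[OF assms(2)] by simp
  have AEG: "AE \<omega> in M. 0 \<le> G \<omega>"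
    using distributed_AE2[OF assms(2), of "\<lambda>x. 0 \<le> x"]
    by (simp add: exponential_density_def)
  have out: "\<forall>D > 0. outage M G R h g1 Ds \<le> outage M G R h g1 D"
  proof (intro allI impI)
    fix D :: real assume D: "D > 0"
    have "{\<omega> \<in> space M. R > R_QMF h g1 D (G \<omega>)} =
          {\<omega> \<in> space M. (G \<omega> \<ge> 0 \<and> (G \<omega> < f1 D \<or> G \<omega> < f2 D)) \<or> (G \<omega> < 0 \<and> R > R_QMF h g1 D (G \<omega>))}"
      using out_iff[OF assms(3) D] unfolding f1_def f2_def s_def by (auto simp: not_le)
    also have "\<dots> \<in> sets M" unfolding R_QMF_def pos_part_def by measurable
    finally have meas: "{\<omega> \<in> space M. R > R_QMF h g1 D (G \<omega>)} \<in> sets M" .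
    have "AE \<omega> in M. \<omega> \<in> {\<omega> \<in> space M. R > R_QMF h g1 Ds (G \<omega>)} \<longrightarrow>
                      \<omega> \<in> {\<omega> \<in> space M. R > R_QMF h g1 D (G \<omega>)}"
      using AEG
    proof (eventually_elim)
      case (elim \<omega>)
      show ?case
      proof
        assume "\<omega> \<in> {\<omega> \<in> space M. R > R_QMF h g1 Ds (G \<omega>)}"
        hence "G \<omega> < f1 Ds \<or> G \<omega> < f2 Ds" and sp: "\<omega> \<in> space M"
          using out_iff[OF assms(3) pos elim] unfolding f1_def f2_def s_def by auto
        hence "G \<omega> < f1 D \<or> G \<omega> < f2 D" using key[OF D] eqf by auto
        thus "\<omega> \<in> {\<omega> \<in> space M. R > R_QMF h g1 D (G \<omega>)}"
          using out_iff[OF assms(3) D elim] sp unfolding f1_def f2_def s_def by auto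
      qed
    qed
    thus "outage M G R h g1 Ds \<le> outage M G R h g1 D"
      unfolding outage_def by (rule finite_measure_mono_AE[OF _ meas])
  qed
  show ?thesis using pos quad out unfolding Ds_def b_def s_def by simp
qed

end
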